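(* For every integer $n\ge0$, every $k\in\mathcal K$ and every pair $s<s'$ in $S$: (1) if $n$ is odd, then $m_{n+1}^{(s'),\dagger}(k)-m_n^{(s'),\dagger}(k)\ge m_{n+1}^{(s),\dagger}(k)-m_n^{(s),\dagger}(k)$; (2) if $n$ is even, then $m_{n+1}^{(s'),\dagger}(k)-m_n^{(s'),\dagger}(k)\le m_{n+1}^{(s),\dagger}(k)-m_n^{(s),\dagger}(k)$.
   Context: Fix a prime $p\ge7$ and $k_0\in\{2,\dots,p\}$. $\{n\}$ is the residue of $n$ mod $p-1$ in $\{0,\dots,p-2\}$. $\mathcal K=\{k\ge2:k\equiv k_0\pmod{p-1}\}$, $k_\bullet=(k-k_0)/(p-1)$. For $s\in\{0,\dots,p-2\}$: $a_s=\{k_0-2-2s\}$, $\delta_s=\lfloor\frac{s+\{a_s+s\}}{p-1}\rfloor$; if $a_s+s<p-1$, $t_1^{(s)}=s+\delta_s$, $t_2^{(s)}=a_s+s+\delta_s+2$; otherwise $t_1^{(s)}=\{a_s+s\}+\delta_s+1$, $t_2^{(s)}=s+\delta_s+1$. For $k\in\mathcal K$: $d_k^{ur,\dagger}(s)=\lfloor\frac{k_\bullet-t_1^{(s)}}{p+1}\rfloor+\lfloor\frac{k_\bullet-t_2^{(s)}}{p+1}\rfloor+2+\delta_s$, $d_k^{Iw,\dagger}=2k_\bullet+2$, and $m_n^{(s),\dagger}(k)=\min\{n-d_k^{ur,\dagger}(s),d_k^{Iw,\dagger}-d_k^{ur,\dagger}(s)-n\}$ if $d_k^{ur,\dagger}(s)<n<d_k^{Iw,\dagger}-d_k^{ur,\dagger}(s)$,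 else $0$. $S=\{\lceil\frac{k_0+1}{2}\rceil,\dots,\lfloor\frac{k_0+p-4}{2}\rfloor\}$. *)

theory Defs
  imports Complex_Main "HOL-Computational_Algebra.Primes" "HOL-Number_Theory.Cong"
begin

(* {n}: residue of n mod (p-1), in {0..p-2} (int mod is nonnegative for positive modulus) *)
definition res :: "int \<Rightarrow> int \<Rightarrow> int" where
  "res p n = n mod (p - 1)"

definition a_s :: "int \<Rightarrow> int \<Rightarrow> int \<Rightarrow> int" where
  "a_s p k0 s = res p (k0 - 2 - 2 * s)"

(* floor division of integers: div on int is floor division *)
definition delta_s :: "int \<Rightarrow> int \<Rightarrow> int \<Rightarrow> int" where
  "delta_s p k0 s = (s + res p (a_s p k0 s + s)) div (p - 1)"

definition t1 :: "int \<Rightarrow> int \<Rightarrow> int \<Rightarrow> int" where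
  "t1 p k0 s = (if a_s p k0 s + s < p - 1 then s + delta_s p k0 s
                else res p (a_s p k0 s + s) + delta_s p k0 s + 1)"

definition t2 :: "int \<Rightarrow> int \<Rightarrow> int \<Rightarrow> int" where
  "t2 p k0 s = (if a_s p k0 s + s < p - 1 then a_s p k0 s + s + delta_s p k0 s + 2
                else s + delta_s p k0 s + 1)"

definition Kset :: "int \<Rightarrow> int \<Rightarrow> int set" where
  "Kset p k0 = {k. k \<ge> 2 \<and> [k = k0] (mod (p - 1))}"

(* k_bullet = (k - k0)/(p-1), exact for k in K *)
definition kbul :: "int \<Rightarrow> int \<Rightarrow> int \<Rightarrow> int" where
  "kbul p k0 k = (k - k0) div (p - 1)"

definition d_ur :: "int \<Rightarrow> int \<Rightarrow> int \<Rightarrow> int \<Rightarrow> int" where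
  "d_ur p k0 k s = (kbul p k0 k - t1 p k0 s) div (p + 1)
                 + (kbul p k0 k - t2 p k0 s) div (p + 1) + 2 + delta_s p k0 s"

definition d_Iw :: "int \<Rightarrow> int \<Rightarrow> int \<Rightarrow> int" where
  "d_Iw p k0 k = 2 * kbul p k0 k + 2"

definition m_dag :: "int \<Rightarrow> int \<Rightarrow> int \<Rightarrow> int \<Rightarrow> int \<Rightarrow> int" where
  "m_dag p k0 s n k =
     (if d_ur p k0 k s < n \<and> n < d_Iw p k0 k - d_ur p k0 k s
      then min (n - d_ur p k0 k s) (d_Iw p k0 k - d_ur p k0 k s - n)
      else 0)"

definition Sset :: "int \<Rightarrow> int \<Rightarrow> int set" where
  "Sset p k0 = {\<lceil>(real_of_int k0 + 1) / 2\<rceil> .. \<lfloor>(real_of_int k0 + real_of_int p - 4) / 2\<rfloor>}"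

end

theory Submission
  imports Defs
begin


lemma Sb: assumes "s \<in> Sset p k0" shows "k0+1 \<le> 2*s \<and> 2*s \<le> k0+p-4"
proof -
  have "\<lceil>(real_of_int k0 + 1) / 2\<rceil> \<le> s" "s \<le> \<lfloor>(real_of_int k0 + real_of_int p - 4) / 2\<rfloor>"
    using assms unfolding Sset_def by auto
  then have "(real_of_int k0 + 1) / 2 \<le> s" "s \<le> (real_of_int k0 + real_of_int p - 4) / 2"
    by (simp_all add: ceiling_le_iff le_floor_iff)
  then have "real_of_int (k0+1) \<le> real_of_int (2*s)" "real_of_int (2*s) \<le> real_of_int (k0+p-4)" by simp_all
  then show ?thesis by linarith
qed

lemma divh: fixes P q r t :: int
  assumes "P > 0" "0 \<le> r" "r < P" "0 \<le> t" "t \<le> P"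
  shows "(q*P + r - t) div P = q + (if t \<le> r then 0 else -1)"
proof (cases "t \<le> r")
  case True
  have eq: "q*P + r - t = (r-t) + q*P" by simp
  have "(q*P + r - t) div P = q + (r-t) div P" using assms(1) by (simp only: eq div_mult_self1)
  moreover have "(r-t) div P = 0" using True assms by (intro div_pos_pos_trivial) auto
  ultimately show ?thesis using True by simp
next
  case False
  have eq: "q*P + r - t = (r-t+P) + (q-1)*P" by (simp add: algebra_simps)
  have "(q*P + r - t) div P = (q - 1) + (r - t + P) div P" using assms(1) by (simp only: eq div_mult_self1)
  moreover have "(r-t+P) div P = 0" using False assms by (intro div_pos_pos_trivial) auto
  ultimately show ?thesis using False by simp
qed

definition e :: "int \<Rightarrow> int \<Rightarrow> int \<Rightarrow> int \<Rightarrow> int" where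
 "e p k0 s r = (if k0-1 \<le> s then 3 - (if s+1 > r then 1 else 0) - (if k0+p-s > r then 1 else 0)
               else 2 - (if k0-1-s > r then 1 else 0) - (if s+1 > r then 1 else 0))"

lemma aval: assumes "p \<ge> 7" "k0+1 \<le> 2*s" "2*s \<le> k0+p-4"
  shows "a_s p k0 s = k0+p-3-2*s"
proof -
  have eq: "k0+p-3-2*s = (k0-2-2*s) + (p-1)" by simp
  have "(k0-2-2*s) mod (p-1) = (k0+p-3-2*s) mod (p-1)" by (simp only: eq mod_add_self2)
  also have "\<dots> = k0+p-3-2*s" using assms by (intro mod_pos_pos_trivial) auto
  finally show ?thesis unfolding a_s_def res_def .
qed

lemma dval: assumes "p \<ge> 7" "2 \<le> k0" "k0 \<le> p" "k0+1 \<le> 2*s" "2*s \<le> k0+p-4"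
  shows "d_ur p k0 k s = 2*(kbul p k0 k div (p+1)) + e p k0 s (kbul p k0 k mod (p+1))"
proof -
  define q where "q = kbul p k0 k div (p+1)"
  define r where "r = kbul p k0 k mod (p+1)"
  have kb: "kbul p k0 k = q*(p+1) + r" unfolding q_def r_def by (rule div_mult_mod_eq[symmetric])
  have p1: "p+1 > 0" using assms by simp
  have r: "0 \<le> r" "r < p+1" unfolding r_def using p1 by (rule pos_mod_sign, rule pos_mod_bound)
  have a: "a_s p k0 s = k0+p-3-2*s" using aval assms by simp
  show ?thesis
  proof (cases "k0 - 1 \<le> s")
    case True
    have x: "a_s p k0 s + s = k0+p-3-s" using a by simp
    have rs: "res p (a_s p k0 s + s) = k0+p-3-s" unfolding res_def x using True assms
      by (intro mod_pos_pos_trivial) auto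
    have eq: "s + (k0+p-3-s) = (k0-2) + 1*(p-1)" by simp
    have "(s + (k0+p-3-s)) div (p-1) = 1 + (k0-2) div (p-1)" using assms
      by (simp only: eq div_mult_self1)
    also have "(k0-2) div (p-1) = 0" using assms by (intro div_pos_pos_trivial) auto
    finally have de: "delta_s p k0 s = 1" unfolding delta_s_def rs by simp
    have lt: "a_s p k0 s + s < p - 1" using x True by simp
    have t1: "t1 p k0 s = s+1" unfolding t1_def de using lt by simp
    have t2: "t2 p k0 s = k0+p-s" unfolding t2_def de using lt x by simp
    have A: "(kbul p k0 k - t1 p k0 s) div (p+1) = q + (if s+1 \<le> r then 0 else -1)"
      unfolding kb t1 using divh[of "p+1" r "s+1" q] r assms by simp
    have B: "(kbul p k0 k - t2 p k0 s) div (p+1) = q + (if k0+p-s \<le> r then 0 else -1)"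
      unfolding kb t2 using divh[of "p+1" r "k0+p-s" q] r assms True by simp
    show ?thesis unfolding d_ur_def A B de e_def q_def[symmetric] r_def[symmetric] using True
      by simp
  next
    case False
    have x: "a_s p k0 s + s = (k0-2-s) + 1*(p-1)" using a by simp
    have rs: "res p (a_s p k0 s + s) = k0-2-s" unfolding res_def x using False assms
      by (simp only: mod_mult_self1) (intro mod_pos_pos_trivial; auto)
    have de: "delta_s p k0 s = 0" unfolding delta_s_def rs using assms
      by (intro div_pos_pos_trivial) auto
    have lt: "\<not> a_s p k0 s + s < p - 1" using x False by simp
    have t1: "t1 p k0 s = k0-1-s" unfolding t1_def de rs using lt by simp
    have t2: "t2 p k0 s = s+1" unfolding t2_def de using lt by simp
    have A: "(kbul p k0 k - t1 p k0 s) div (p+1) = q + (if k0-1-s \<le> r then 0 else -1)"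
      unfolding kb t1 using divh[of "p+1" r "k0-1-s" q] r assms False by simp
    have B: "(kbul p k0 k - t2 p k0 s) div (p+1) = q + (if s+1 \<le> r then 0 else -1)"
      unfolding kb t2 using divh[of "p+1" r "s+1" q] r assms by simp
    show ?thesis unfolding d_ur_def A B de e_def q_def[symmetric] r_def[symmetric] using False
      by simp
  qed
qed

lemma erel: assumes "p \<ge> 7" "2 \<le> k0" "k0 \<le> p" "k0+1 \<le> 2*s" "2*s \<le> k0+p-4"
   "k0+1 \<le> 2*s'" "2*s' \<le> k0+p-4" "s < s'" "0 \<le> r" "r \<le> p"
  shows "e p k0 s' r = e p k0 s r \<or> (e p k0 s r = 0 \<and> e p k0 s' r = 1)
     \<or> (e p k0 s r = 2 \<and> (e p k0 s' r = 1 \<or> e p k0 s' r = 3))"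
proof (cases "k0-1 \<le> s")
  case True
  then have T': "k0-1 \<le> s'" using assms by simp
  show ?thesis unfolding e_def using True T' assms
    by (cases "s+1 > r"; cases "s'+1 > r"; cases "k0+p-s > r"; cases "k0+p-s' > r"; simp)
next
  case False
  show ?thesis
  proof (cases "k0-1 \<le> s'")
    case True
    show ?thesis unfolding e_def using True False assms
      by (cases "s+1 > r"; cases "s'+1 > r"; cases "k0-1-s > r"; cases "k0+p-s' > r"; simp)
  next
    case F': False
    show ?thesis unfolding e_def using F' False assms
      by (cases "s+1 > r"; cases "s'+1 > r"; cases "k0-1-s > r"; cases "k0-1-s' > r"; simp)
  qed
qed

definition M :: "int \<Rightarrow> int \<Rightarrow> int \<Rightarrow> int" where
 "M d kb n = (if d < n \<and> n < 2*kb+2-d then min (n-d) (2*kb+2-d-n) else 0)"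

lemma diffM: "M d kb (n+1) - M d kb n =
   (if d \<le> n \<and> n < kb+1 then 1 else if kb+1 \<le> n \<and> n < 2*kb+2-d then -1 else 0)"
  unfolding M_def min_def by auto

lemma absM: fixes d d' kb n :: int
  assumes "d' = d \<or> (even d \<and> (d' = d+1 \<or> d' = d - 1))"
  shows "(odd n \<longrightarrow> M d' kb (n+1) - M d' kb n \<ge> M d kb (n+1) - M d kb n)
       \<and> (even n \<longrightarrow> M d' kb (n+1) - M d' kb n \<le> M d kb (n+1) - M d kb n)"
proof -
  { assume "d' = d" then have ?thesis by simp }
  moreover
  { assume "even d" "d' = d+1 \<or> d' = d - 1"
    then obtain i where i: "d = 2*i" by auto
    have ?thesis
    proof (cases "even n")
      case True then obtain j where "n = 2*j" by auto
      then show ?thesis using i \<open>d' = d+1 \<or> d' = d - 1\<close> unfolding diffM by (auto; presburger)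
    next
      case False then obtain j where "n = 2*j+1" using oddE by blast
      then show ?thesis using i \<open>d' = d+1 \<or> d' = d - 1\<close> unfolding diffM by (auto; presburger)
    qed }
  ultimately show ?thesis using assms by blast
qed


lemma mM: "m_dag p k0 s n k = M (d_ur p k0 k s) (kbul p k0 k) n"
  unfolding m_dag_def M_def d_Iw_def by simp

theorem mainTheorem11:
  fixes p k0 n k s s' :: int
  assumes "prime p" and "p \<ge> 7"
    and "2 \<le> k0" and "k0 \<le> p"
    and "n \<ge> 0"
    and "k \<in> Kset p k0"
    and "s \<in> Sset p k0" and "s' \<in> Sset p k0" and "s < s'"
  shows "(odd n \<longrightarrow>
            m_dag p k0 s' (n + 1) k - m_dag p k0 s' n k \<ge> m_dag p k0 s (n + 1) k - m_dag p k0 s n k)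
       \<and> (even n \<longrightarrow>
            m_dag p k0 s' (n + 1) k - m_dag p k0 s' n k \<le> m_dag p k0 s (n + 1) k - m_dag p k0 s n k)"
proof -
  define q where "q = kbul p k0 k div (p+1)"
  define r where "r = kbul p k0 k mod (p+1)"
  have p1: "p+1 > 0" using assms by simp
  have r: "0 \<le> r" "r < p+1" unfolding r_def using p1 by (rule pos_mod_sign, rule pos_mod_bound)
  have sb: "k0+1 \<le> 2*s" "2*s \<le> k0+p-4" using Sb[OF assms(7)] by auto
  have sb': "k0+1 \<le> 2*s'" "2*s' \<le> k0+p-4" using Sb[OF assms(8)] by auto
  have d: "d_ur p k0 k s = 2*q + e p k0 s r" unfolding q_def r_def
    using dval assms sb by simp
  have d': "d_ur p k0 k s' = 2*q + e p k0 s' r" unfolding q_def r_def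
    using dval assms sb' by simp
  have er: "e p k0 s' r = e p k0 s r \<or> (e p k0 s r = 0 \<and> e p k0 s' r = 1)
     \<or> (e p k0 s r = 2 \<and> (e p k0 s' r = 1 \<or> e p k0 s' r = 3))"
    using erel[of p k0 s s' r] assms sb sb' r by simp
  have rel: "d_ur p k0 k s' = d_ur p k0 k s \<or> (even (d_ur p k0 k s) \<and>
      (d_ur p k0 k s' = d_ur p k0 k s + 1 \<or> d_ur p k0 k s' = d_ur p k0 k s - 1))"
    unfolding d d' using er by auto
  show ?thesis unfolding mM using absM[OF rel] .
qed

end
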